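(* Let $G:[0,\nu)\to[0,\infty)$ be increasing with $G(0)=0$ and range $[0,\infty)$, and suppose that for every $c>0$ the function $x\mapsto G^{-1}(G(x)+G(c))$ is concave on $[0,\nu)$. Let $f$ be convex on $[0,\infty)$ with $f(1)=0$ and $\mathsf{D_m}(f)\le\nu$. Assume that $G(D_f(q_Yq_Z\|r_Yr_Z))\le G(D_f(q_Y\|r_Y))+G(D_f(q_Z\|r_Z))$ holds for all distributions $q_Y\ll r_Y$ on $\mathcal{Y}$ and $q_Z\ll r_Z$ on $\mathcal{Z}$ whenever $|\mathcal{Y}|=|\mathcal{Z}|=2$. Then this inequality holds for all distributions $q_Y\ll r_Y$, $q_Z\ll r_Z$ on finite alphabets $\mathcal{Y},\mathcal{Z}$ of arbitrary size.
   Context: For distributions $p\ll q$ on a finite set, $D_f(p\|q)=\sum_x q(x) f(p(x)/q(x))$ with $0f(0/0)=0$; $\mathsf{D_m}(f)=f(0)+\lim_{t\to\infty}f(t)/t$. *)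

theory Defs
  imports "HOL-Analysis.Analysis" "HOL-Library.Extended_Real"
begin

definition is_dist :: "('a::finite \<Rightarrow> real) \<Rightarrow> bool" where
  "is_dist p \<longleftrightarrow> (\<forall>x. 0 \<le> p x) \<and> sum p UNIV = 1"

definition abs_cont :: "('a::finite \<Rightarrow> real) \<Rightarrow> ('a \<Rightarrow> real) \<Rightarrow> bool" where
  "abs_cont p q \<longleftrightarrow> (\<forall>x. q x = 0 \<longrightarrow> p x = 0)"

text \<open>f-divergence, with the convention 0 f(0/0) = 0 (only used for p << q).\<close>
definition fdiv :: "(real \<Rightarrow> real) \<Rightarrow> ('a::finite \<Rightarrow> real) \<Rightarrow> ('a \<Rightarrow> real) \<Rightarrow> real" where
  "fdiv f p q = (\<Sum>x\<in>UNIV. if q x = 0 then 0 else q x * f (p x / q x))"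

definition prod_dist :: "('a \<Rightarrow> real) \<Rightarrow> ('b \<Rightarrow> real) \<Rightarrow> ('a \<times> 'b \<Rightarrow> real)" where
  "prod_dist p q = (\<lambda>(y, z). p y * q z)"

definition Dm :: "(real \<Rightarrow> real) \<Rightarrow> ereal" where
  "Dm f = ereal (f 0) + Lim at_top (\<lambda>t. ereal (f t / t))"

end

theory Submission
  imports Defs
begin


lemma sum_supp: "(\<Sum>x\<in>(UNIV::'a::finite set). if q x = 0 then 0 else h x) = (\<Sum>x\<in>{x. q x \<noteq> 0}. h x)"
  using sum.inter_filter[of "UNIV::'a set" h "\<lambda>x. q x \<noteq> 0"] by (simp add: if_distrib) (rule sum.cong, auto)

lemma fdiv_supp: "fdiv g p q = (\<Sum>x\<in>{x. q x \<noteq> 0}. q x * g (p x / q x))"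
  unfolding fdiv_def by (rule sum_supp)

lemma dist_supp:
  fixes p q :: "'a::finite \<Rightarrow> real"
  assumes "is_dist p" "is_dist q" "abs_cont p q"
  shows "(\<Sum>x\<in>{x. q x \<noteq> 0}. q x) = 1" "(\<Sum>x\<in>{x. q x \<noteq> 0}. p x) = 1"
proof -
  have "(\<Sum>x\<in>{x. q x \<noteq> 0}. q x) = (\<Sum>x\<in>UNIV. if q x = 0 then 0 else q x)"
    by (rule sum_supp[symmetric])
  also have "\<dots> = sum q UNIV" by (rule sum.cong) auto
  finally show "(\<Sum>x\<in>{x. q x \<noteq> 0}. q x) = 1" using assms unfolding is_dist_def by simp
  have "(\<Sum>x\<in>{x. q x \<noteq> 0}. p x) = (\<Sum>x\<in>UNIV. if q x = 0 then 0 else p x)"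
    by (rule sum_supp[symmetric])
  also have "\<dots> = sum p UNIV" by (rule sum.cong) (use assms in \<open>auto simp: abs_cont_def\<close>)
  finally show "(\<Sum>x\<in>{x. q x \<noteq> 0}. p x) = 1" using assms unfolding is_dist_def by simp
qed

context
  fixes \<nu> :: ereal and f :: "real \<Rightarrow> real"
  assumes nu_pos: "\<nu> > 0" and f_convex: "convex_on {0..} f" and f1: "f 1 = 0"
    and f_Dm: "Dm f \<le> \<nu>"
begin

lemma slope_mono:
  assumes "0 < u" "u \<le> v"
  shows "(f u - f 0) / u \<le> (f v - f 0) / v"
proof -
  have v: "0 < v" using assms by simp
  have "f ((1 - u/v) *\<^sub>R 0 + (u/v) *\<^sub>R v) \<le> (1 - u/v) * f 0 + (u/v) * f v"
    by (rule convex_onD[OF f_convex]) (use assms v in auto)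
  moreover have "(1 - u/v) *\<^sub>R 0 + (u/v) *\<^sub>R v = u" using v by simp
  ultimately have "f u \<le> (1 - u/v) * f 0 + (u/v) * f v" by simp
  hence "f u - f 0 \<le> (u/v) * (f v - f 0)" by (simp add: algebra_simps)
  hence "f u - f 0 \<le> ((f v - f 0) / v) * u" by (simp add: field_simps)
  thus ?thesis using assms by (simp add: pos_divide_le_eq)
qed

definition "Ls = (SUP t\<in>{0<..}. ereal ((f t - f 0) / t))"

lemma Ls_ge: "0 < t \<Longrightarrow> ereal ((f t - f 0) / t) \<le> Ls"
  unfolding Ls_def by (rule SUP_upper) auto

lemma slope_tendsto: "((\<lambda>t. ereal ((f t - f 0) / t)) \<longlongrightarrow> Ls) at_top"
proof (rule order_tendstoI)
  fix a assume "a < Ls"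
  then obtain t0 where t0: "t0 > 0" "a < ereal ((f t0 - f 0) / t0)"
    unfolding Ls_def less_SUP_iff by auto
  show "\<forall>\<^sub>F t in at_top. a < ereal ((f t - f 0) / t)"
    using eventually_ge_at_top[of t0]
  proof (rule eventually_mono)
    fix t assume "t0 \<le> t"
    hence "ereal ((f t0 - f 0) / t0) \<le> ereal ((f t - f 0) / t)"
      using slope_mono[of t0 t] t0 by simp
    thus "a < ereal ((f t - f 0) / t)" by (rule less_le_trans[OF t0(2)])
  qed
next
  fix b assume "Ls < b"
  show "\<forall>\<^sub>F t in at_top. ereal ((f t - f 0) / t) < b"
    using eventually_gt_at_top[of 0]
    by (rule eventually_mono) (use Ls_ge \<open>Ls < b\<close> in force)
qed

lemma Ls_not_MInf: "Ls \<noteq> -\<infinity>"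
  using Ls_ge[of 1] by auto

lemma Dm_eq: "Dm f = ereal (f 0) + Ls"
proof -
  have lim0: "((\<lambda>t::real. f 0 / t) \<longlongrightarrow> 0) at_top"
    by (rule tendsto_divide_0[OF tendsto_const]) (rule filterlim_at_top_imp_at_infinity[OF filterlim_ident])
  have lim0': "((\<lambda>t::real. ereal (f 0 / t)) \<longlongrightarrow> ereal 0) at_top"
    using lim0 by (simp only: lim_ereal)
  have A: "((\<lambda>t. ereal ((f t - f 0) / t) + ereal (f 0 / t)) \<longlongrightarrow> Ls + ereal 0) at_top"
    by (rule tendsto_add_ereal_general[OF _ slope_tendsto lim0']) (use Ls_not_MInf in simp)
  have ev: "\<forall>\<^sub>F t in at_top. ereal ((f t - f 0) / t) + ereal (f 0 / t) = ereal (f t / t)"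
    using eventually_gt_at_top[of 0] by (rule eventually_mono) (simp add: diff_divide_distrib)
  have "((\<lambda>t. ereal (f t / t)) \<longlongrightarrow> Ls + ereal 0) at_top"
    using A tendsto_cong[OF ev] by blast
  hence "((\<lambda>t. ereal (f t / t)) \<longlongrightarrow> Ls) at_top" by simp
  hence "Lim at_top (\<lambda>t. ereal (f t / t)) = Ls" by (intro tendsto_Lim) auto
  thus ?thesis unfolding Dm_def by simp
qed

lemma fdiv_nonneg:
  fixes p q :: "'a::finite \<Rightarrow> real"
  assumes d: "is_dist p" "is_dist q" "abs_cont p q"
  shows "0 \<le> fdiv f p q"
proof -
  let ?S = "{x. q x \<noteq> 0}"
  note sq = dist_supp(1)[OF d] and sp = dist_supp(2)[OF d]
  have ne: "?S \<noteq> {}" using sq by (metis sum.empty zero_neq_one)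
  have "f (\<Sum>x\<in>?S. q x *\<^sub>R (p x / q x)) \<le> (\<Sum>x\<in>?S. q x * f (p x / q x))"
    by (rule convex_on_sum[OF _ ne f_convex sq]) (use d in \<open>auto simp: is_dist_def\<close>)
  moreover have "(\<Sum>x\<in>?S. q x *\<^sub>R (p x / q x)) = 1"
    using sp by simp
  ultimately show ?thesis using f1 by (simp add: fdiv_supp)
qed

lemma fdiv_less:
  fixes p q :: "'a::finite \<Rightarrow> real"
  assumes d: "is_dist p" "is_dist q" "abs_cont p q"
  shows "ereal (fdiv f p q) < \<nu>"
proof (cases Ls)
  case PInf
  hence "\<nu> = \<infinity>" using f_Dm Dm_eq by simp
  thus ?thesis by simp
next
  case MInf
  thus ?thesis using Ls_not_MInf by simp
next
  case (real L)
  let ?S = "{x. q x \<noteq> 0}"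
  note sq = dist_supp(1)[OF d] and sp = dist_supp(2)[OF d]
  have qpos: "q x > 0" if "x \<in> ?S" for x using d that unfolding is_dist_def
    by (metis less_eq_real_def mem_Collect_eq)
  have sL: "(f t - f 0) / t \<le> L" if "t > 0" for t using Ls_ge[OF that] real by simp
  have fle: "f t \<le> f 0 + t * L" if "t \<ge> 0" for t
  proof (cases "t = 0")
    case False
    hence "t > 0" using that by simp
    thus ?thesis using sL[OF \<open>t > 0\<close>] by (simp add: divide_le_eq algebra_simps)
  qed simp
  have termle: "q x * f (p x / q x) \<le> q x * f 0 + p x * L" if "x \<in> ?S" for x
  proof -
    have "p x / q x \<ge> 0" using d qpos[OF that] unfolding is_dist_def by simp
    hence "f (p x / q x) \<le> f 0 + (p x / q x) * L" by (rule fle)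
    hence "q x * f (p x / q x) \<le> q x * (f 0 + (p x / q x) * L)"
      using qpos[OF that] by (simp only: mult_le_cancel_left_pos)
    also have "\<dots> = q x * f 0 + p x * L" using qpos[OF that] by (simp add: field_simps)
    finally show ?thesis .
  qed
  have sumeq: "(\<Sum>x\<in>?S. q x * f 0 + p x * L) = f 0 + L"
    using sq sp by (simp add: sum.distrib sum_distrib_right[symmetric])
  have Dm: "ereal (f 0 + L) \<le> \<nu>" using f_Dm Dm_eq real by simp
  show ?thesis
  proof (cases "\<exists>t0>0. (f t0 - f 0) / t0 = L")
    case True
    then obtain t0 where t0: "t0 > 0" "(f t0 - f 0) / t0 = L" by auto
    have "f 1 = f 0 + L"
    proof (cases "t0 \<le> 1")
      case True
      have "(f t0 - f 0) / t0 \<le> (f 1 - f 0) / 1" by (rule slope_mono) (use t0 True in auto)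
      thus ?thesis using sL[of 1] t0 by simp
    next
      case False
      have s2: "(f (2*t0) - f 0) / (2*t0) = L"
        using slope_mono[of t0 "2*t0"] sL[of "2*t0"] t0 by simp
      have ft0: "f t0 = f 0 + t0 * L" using t0 by (simp add: field_simps)
      have f2: "f (2*t0) = f 0 + 2*t0 * L" using s2 t0 by (simp add: field_simps)
      define lam where "lam = (t0 - 1) / (2*t0 - 1)"
      have lam: "0 \<le> lam" "lam \<le> 1" using False by (auto simp: lam_def field_simps)
      have cv: "f ((1 - lam) *\<^sub>R 1 + lam *\<^sub>R (2*t0)) \<le> (1 - lam) * f 1 + lam * f (2*t0)"
        by (rule convex_onD[OF f_convex]) (use lam t0 in auto)
      have nz: "2*t0 - 1 \<noteq> 0" using False by simp
      have idl: "(1 - lam) + lam * (2*t0) = t0"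
          unfolding lam_def using nz by (simp add: divide_simps) algebra
      have "(1 - lam) *\<^sub>R 1 + lam *\<^sub>R (2*t0) = t0"
        using idl by simp
      with cv have "f 0 + t0 * L \<le> (1 - lam) * f 1 + lam * (f 0 + 2*t0 * L)"
        using ft0 f2 by simp
      hence i1: "f 0 + t0 * L \<le> (1 - lam) * f 1 + lam * f 0 + (lam*(2*t0))*L"
        by (simp add: algebra_simps)
      have "lam*(2*t0) = t0 - 1 + lam" using idl by linarith
      hence "(lam*(2*t0))*L = (t0 - 1 + lam) * L" by simp
      hence "(lam*(2*t0))*L = t0 * L - L + lam * L" by (simp add: algebra_simps)
      with i1 have "(1 - lam) * (f 0 + L) \<le> (1 - lam) * f 1"
        by (simp add: algebra_simps)
      moreover have "1 - lam > 0" using False by (simp add: lam_def field_simps)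
      ultimately have "f 0 + L \<le> f 1" by simp
      thus ?thesis using fle[of 1] by simp
    qed
    hence "f 0 + L = 0" using f1 by simp
    have "fdiv f p q \<le> f 0 + L" unfolding fdiv_supp sumeq[symmetric]
      by (rule sum_mono) (rule termle)
    hence "ereal (fdiv f p q) \<le> 0" using \<open>f 0 + L = 0\<close> by simp
    thus ?thesis using nu_pos by (meson le_less_trans)
  next
    case False
    hence sL': "(f t - f 0) / t < L" if "t > 0" for t using sL[OF that] that by force
    obtain x where px: "p x > 0"
    proof -
      have "\<exists>x. p x \<noteq> 0" using d unfolding is_dist_def by (metis sum.neutral zero_neq_one)
      then obtain x where "p x \<noteq> 0" by auto
      hence "p x > 0" using d unfolding is_dist_def by (metis less_eq_real_def)
      thus ?thesis using that by blast
    qed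
    have xS: "x \<in> ?S" using px d unfolding abs_cont_def by auto
    have "q x * f (p x / q x) < q x * f 0 + p x * L"
    proof -
      have t: "p x / q x > 0" using px qpos[OF xS] by simp
      have flt: "f u < f 0 + u * L" if "u > 0" for u
        using sL'[OF that] that by (simp add: divide_less_eq algebra_simps)
      have "f (p x / q x) < f 0 + (p x / q x) * L" by (rule flt[OF t])
      hence "q x * f (p x / q x) < q x * (f 0 + (p x / q x) * L)"
        using qpos[OF xS] by simp
      also have "\<dots> = q x * f 0 + p x * L" using qpos[OF xS] by (simp add: field_simps)
      finally show ?thesis .
    qed
    hence "fdiv f p q < f 0 + L" unfolding fdiv_supp sumeq[symmetric]
      by (intro sum_strict_mono_ex1) (use termle xS in auto)
    hence "ereal (fdiv f p q) < ereal (f 0 + L)" by simp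
    thus ?thesis using Dm by (rule less_le_trans)
  qed
qed

end



lemma trm_aux:
  fixes a b E ri rj ga gb :: real
  assumes "b - a \<noteq> 0"
  shows "(ri * rj * (b - a) / E) * (((b-1)/(b-a)) * ga + (1 - (b-1)/(b-a)) * gb)
     = (ri * ga) * (rj * (b - 1)) / E + (rj * gb) * (ri * (1 - a)) / E"
proof -
  have 1: "(b - a) * ((b-1)/(b-a)) = b - 1" using assms by simp
  have 2: "(b - a) * (1 - (b-1)/(b-a)) = 1 - a" using 1 by (simp add: right_diff_distrib)
  have "(ri * rj * (b - a) / E) * (((b-1)/(b-a)) * ga + (1 - (b-1)/(b-a)) * gb)
     = (ri * rj / E) * (((b - a) * ((b-1)/(b-a))) * ga + ((b - a) * (1 - (b-1)/(b-a))) * gb)"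
  proof -
    have gen: "\<And>X Y c. (ri*rj*c/E)*(X*ga+Y*gb) = (ri*rj/E)*((c*X)*ga + (c*Y)*gb)"
      by (simp add: divide_inverse algebra_simps)
    show ?thesis by (rule gen)
  qed
  also have "\<dots> = (ri * rj / E) * ((b - 1) * ga + (1 - a) * gb)" by (simp only: 1 2)
  also have "\<dots> = (ri * ga) * (rj * (b - 1)) / E + (rj * gb) * (ri * (1 - a)) / E"
    by (simp add: divide_inverse algebra_simps)
  finally show ?thesis .
qed

lemma decomp:
  fixes r q :: "'a::finite \<Rightarrow> real" and F \<Phi> H :: "real \<Rightarrow> real" and D :: "real set"
  assumes H: "concave_on D H"
    and two: "\<And>a b. 0 \<le> a \<Longrightarrow> a < 1 \<Longrightarrow> 1 \<le> b \<Longrightarrow>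
       ((b-1)/(b-a)) * F a + (1 - (b-1)/(b-a)) * F b \<in> D \<and>
       ((b-1)/(b-a)) * \<Phi> a + (1 - (b-1)/(b-a)) * \<Phi> b
         \<le> H (((b-1)/(b-a)) * F a + (1 - (b-1)/(b-a)) * F b)"
    and r0: "\<And>x. 0 \<le> r x" and q0: "\<And>x. 0 \<le> q x"
    and sr: "(\<Sum>x\<in>{x. r x \<noteq> 0}. r x) = 1" and sq: "(\<Sum>x\<in>{x. r x \<noteq> 0}. q x) = 1"
  shows "(\<Sum>x\<in>{x. r x \<noteq> 0}. r x * \<Phi> (q x / r x)) \<le> H (\<Sum>x\<in>{x. r x \<noteq> 0}. r x * F (q x / r x))"
proof -
  define S where "S = {x. r x \<noteq> 0}"
  define t where "t x = q x / r x" for x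
  define L where "L = {x\<in>S. t x < 1}"
  define U where "U = {x\<in>S. t x \<ge> 1}"
  define E where "E = (\<Sum>i\<in>L. r i * (1 - t i))"
  have rpos: "r x > 0" if "x \<in> S" for x using that r0[of x] by (auto simp: S_def)
  have qt: "q x = r x * t x" if "x \<in> S" for x using rpos[OF that] by (simp add: t_def)
  have t0: "t x \<ge> 0" for x using r0[of x] q0[of x] by (simp add: t_def)
  have fin: "finite L" "finite U" "finite S" by auto
  have SLU: "S = L \<union> U" "L \<inter> U = {}" by (auto simp: L_def U_def)
  have "(\<Sum>x\<in>S. r x * (t x - 1)) = (\<Sum>x\<in>S. q x) - (\<Sum>x\<in>S. r x)"
    by (simp add: sum_subtractf[symmetric] algebra_simps qt)
  also have "\<dots> = 0" using sr sq by (simp add: S_def)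
  finally have "(\<Sum>x\<in>L. r x * (t x - 1)) + (\<Sum>x\<in>U. r x * (t x - 1)) = 0"
    using SLU(1) by (simp add: sum.union_disjoint[OF fin(1,2) SLU(2)])
  moreover have "(\<Sum>x\<in>L. r x * (t x - 1)) = - E" unfolding E_def
    by (simp add: sum_negf[symmetric] algebra_simps)
  ultimately have EU: "(\<Sum>j\<in>U. r j * (t j - 1)) = E" by simp
  have E0: "E \<ge> 0" unfolding E_def
    by (rule sum_nonneg) (auto simp: L_def intro!: mult_nonneg_nonneg less_imp_le[OF rpos])
  have gsum: "(\<Sum>x\<in>S. r x * g (t x)) = (\<Sum>x\<in>L. r x * g (t x)) + (\<Sum>x\<in>U. r x * g (t x))" for g
    using SLU(1) by (simp add: sum.union_disjoint[OF fin(1,2) SLU(2)])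
  show ?thesis
  proof (cases "E = 0")
    case True
    have Lempty: "L = {}"
    proof (rule ccontr)
      assume "L \<noteq> {}"
      hence "E > 0" unfolding E_def
        by (intro sum_pos fin) (auto simp: L_def intro!: mult_pos_pos rpos)
      thus False using True by simp
    qed
    have "\<forall>j\<in>U. r j * (t j - 1) = 0"
      using EU True by (subst sum_nonneg_eq_0_iff[symmetric]) (auto simp: U_def intro!: mult_nonneg_nonneg less_imp_le[OF rpos])
    hence t1: "t j = 1" if "j \<in> S" for j using that Lempty SLU rpos by fastforce
    have "(\<Sum>x\<in>S. r x * g (t x)) = g 1" for g
    proof -
      have "(\<Sum>x\<in>S. r x * g (t x)) = (\<Sum>x\<in>S. r x) * g 1"
        by (simp add: sum_distrib_right t1)
      thus ?thesis using sr by (simp add: S_def)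
    qed
    moreover have "\<Phi> 1 \<le> H (F 1)" using two[of 0 1] by simp
    ultimately show ?thesis by (simp add: S_def t_def)
  next
    case False
    hence Epos: "E > 0" using E0 by simp
    define lam where "lam p = r (fst p) * r (snd p) * (t (snd p) - t (fst p)) / E" for p
    define al where "al p = (t (snd p) - 1) / (t (snd p) - t (fst p))" for p
    define P where "P = L \<times> U"
    have key: "(\<Sum>p\<in>P. lam p * (al p * g (t (fst p)) + (1 - al p) * g (t (snd p))))
             = (\<Sum>x\<in>S. r x * g (t x))" for g
    proof -
      have trm: "lam p * (al p * g (t (fst p)) + (1 - al p) * g (t (snd p)))
           = (r (fst p) * g (t (fst p))) * (r (snd p) * (t (snd p) - 1)) / E
             + (r (snd p) * g (t (snd p))) * (r (fst p) * (1 - t (fst p))) / E" if "p \<in> P" for p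
      proof -
        have "t (fst p) < 1" "1 \<le> t (snd p)" using that by (auto simp: P_def L_def U_def)
        hence nz: "t (snd p) - t (fst p) \<noteq> 0" by simp
        show ?thesis unfolding lam_def al_def by (rule trm_aux[OF nz])
      qed
      have "(\<Sum>p\<in>P. lam p * (al p * g (t (fst p)) + (1 - al p) * g (t (snd p))))
          = (\<Sum>p\<in>P. (r (fst p) * g (t (fst p))) * (r (snd p) * (t (snd p) - 1)) / E)
          + (\<Sum>p\<in>P. (r (snd p) * g (t (snd p))) * (r (fst p) * (1 - t (fst p))) / E)"
        by (simp add: trm sum.distrib)
      also have "(\<Sum>p\<in>P. (r (fst p) * g (t (fst p))) * (r (snd p) * (t (snd p) - 1)) / E)
          = (\<Sum>i\<in>L. \<Sum>j\<in>U. (r i * g (t i)) * (r j * (t j - 1)) / E)"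
        unfolding P_def by (simp add: sum.cartesian_product split_beta)
      also have "\<dots> = (\<Sum>i\<in>L. (r i * g (t i)) * ((\<Sum>j\<in>U. r j * (t j - 1)) / E))"
        by (simp add: sum_distrib_left sum_divide_distrib)
      also have "\<dots> = (\<Sum>i\<in>L. r i * g (t i))" using EU Epos by simp
      also have "(\<Sum>p\<in>P. (r (snd p) * g (t (snd p))) * (r (fst p) * (1 - t (fst p))) / E)
          = (\<Sum>i\<in>L. \<Sum>j\<in>U. (r j * g (t j)) * (r i * (1 - t i)) / E)"
        unfolding P_def by (simp add: sum.cartesian_product split_beta)
      also have "\<dots> = (\<Sum>j\<in>U. \<Sum>i\<in>L. (r j * g (t j)) * (r i * (1 - t i)) / E)"
        by (rule sum.swap)
      also have "\<dots> = (\<Sum>j\<in>U. (r j * g (t j)) * ((\<Sum>i\<in>L. r i * (1 - t i)) / E))"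
        by (simp add: sum_distrib_left sum_divide_distrib)
      also have "\<dots> = (\<Sum>j\<in>U. r j * g (t j))" using Epos by (simp add: E_def[symmetric])
      finally show ?thesis using gsum by simp
    qed
    have lam0: "lam p \<ge> 0" if "p \<in> P" for p
    proof -
      have "fst p \<in> S" "snd p \<in> S" "t (fst p) < 1" "1 \<le> t (snd p)"
        using that by (auto simp: P_def L_def U_def)
      thus ?thesis unfolding lam_def using Epos rpos by (auto intro!: divide_nonneg_pos mult_nonneg_nonneg less_imp_le)
    qed
    have lam1: "(\<Sum>p\<in>P. lam p) = 1"
      using key[of "\<lambda>_. 1"] sr by (simp add: S_def algebra_simps)
    have Pne: "P \<noteq> {}"
    proof -
      have "L \<noteq> {}" using Epos by (auto simp: E_def)
      moreover have "U \<noteq> {}" using EU Epos by auto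
      ultimately show ?thesis by (simp add: P_def)
    qed
    have twoP: "al p * F (t (fst p)) + (1 - al p) * F (t (snd p)) \<in> D \<and>
       al p * \<Phi> (t (fst p)) + (1 - al p) * \<Phi> (t (snd p))
         \<le> H (al p * F (t (fst p)) + (1 - al p) * F (t (snd p)))" if "p \<in> P" for p
      unfolding al_def using that by (intro two) (auto simp: P_def L_def U_def t0)
    have "(\<Sum>x\<in>S. r x * \<Phi> (t x)) = (\<Sum>p\<in>P. lam p * (al p * \<Phi> (t (fst p)) + (1 - al p) * \<Phi> (t (snd p))))"
      by (rule key[symmetric])
    also have "\<dots> \<le> (\<Sum>p\<in>P. lam p * H (al p * F (t (fst p)) + (1 - al p) * F (t (snd p))))"
      by (rule sum_mono) (use twoP lam0 in \<open>auto intro!: mult_left_mono\<close>)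
    also have "\<dots> \<le> H (\<Sum>p\<in>P. lam p *\<^sub>R (al p * F (t (fst p)) + (1 - al p) * F (t (snd p))))"
      by (rule concave_on_sum[OF _ Pne H lam1]) (use twoP lam0 in \<open>auto simp: P_def\<close>)
    also have "(\<Sum>p\<in>P. lam p *\<^sub>R (al p * F (t (fst p)) + (1 - al p) * F (t (snd p))))
        = (\<Sum>x\<in>S. r x * F (t x))" using key[of F] by simp
    finally show ?thesis by (simp add: S_def t_def)
  qed
qed




lemma sum_UNIV_prod: "sum g (UNIV :: ('a::finite \<times> 'b::finite) set) = (\<Sum>y\<in>UNIV. \<Sum>z\<in>UNIV. g (y, z))"
  unfolding UNIV_Times_UNIV[symmetric] sum.cartesian_product by (simp add: split_beta)

lemma prod_is_dist:
  fixes p :: "'a::finite \<Rightarrow> real" and q :: "'b::finite \<Rightarrow> real"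
  assumes "is_dist p" "is_dist q"
  shows "is_dist (prod_dist p q)"
proof -
  have "sum (prod_dist p q) UNIV = (\<Sum>y\<in>UNIV. \<Sum>z\<in>UNIV. p y * q z)"
    unfolding prod_dist_def by (simp add: sum_UNIV_prod)
  also have "\<dots> = sum p UNIV * sum q UNIV" by (simp add: sum_product)
  finally show ?thesis using assms unfolding is_dist_def prod_dist_def by auto
qed

lemma prod_abs_cont:
  assumes "abs_cont p r" "abs_cont q s"
  shows "abs_cont (prod_dist p q) (prod_dist r s)"
  using assms unfolding abs_cont_def prod_dist_def by auto

lemma fdiv_prod:
  fixes qY rY :: "'y::finite \<Rightarrow> real" and qZ rZ :: "'z::finite \<Rightarrow> real"
  shows "fdiv f (prod_dist qY qZ) (prod_dist rY rZ) =
    (\<Sum>y\<in>UNIV. if rY y = 0 then 0 else rY y *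
       (\<Sum>z\<in>UNIV. if rZ z = 0 then 0 else rZ z * f ((qY y / rY y) * qZ z / rZ z)))"
proof -
  have "fdiv f (prod_dist qY qZ) (prod_dist rY rZ) =
     (\<Sum>y\<in>UNIV. \<Sum>z\<in>UNIV. if rY y * rZ z = 0 then 0 else rY y * rZ z * f (qY y * qZ z / (rY y * rZ z)))"
    unfolding fdiv_def prod_dist_def sum_UNIV_prod by (simp only: prod.case)
  also have "\<dots> = (\<Sum>y\<in>UNIV. if rY y = 0 then 0 else rY y *
       (\<Sum>z\<in>UNIV. if rZ z = 0 then 0 else rZ z * f ((qY y / rY y) * qZ z / rZ z)))"
  proof (rule sum.cong)
    fix y
    show "(\<Sum>z\<in>UNIV. if rY y * rZ z = 0 then 0 else rY y * rZ z * f (qY y * qZ z / (rY y * rZ z))) =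
      (if rY y = 0 then 0 else rY y *
       (\<Sum>z\<in>UNIV. if rZ z = 0 then 0 else rZ z * f ((qY y / rY y) * qZ z / rZ z)))"
    proof (cases "rY y = 0")
      case False
      have "(\<Sum>z\<in>UNIV. if rY y * rZ z = 0 then 0 else rY y * rZ z * f (qY y * qZ z / (rY y * rZ z)))
         = (\<Sum>z\<in>UNIV. rY y * (if rZ z = 0 then 0 else rZ z * f ((qY y / rY y) * qZ z / rZ z)))"
      proof (rule sum.cong)
        fix z
        show "(if rY y * rZ z = 0 then 0 else rY y * rZ z * f (qY y * qZ z / (rY y * rZ z))) =
          rY y * (if rZ z = 0 then 0 else rZ z * f ((qY y / rY y) * qZ z / rZ z))"
        proof (cases "rZ z = 0")
          case False
          have "qY y * qZ z / (rY y * rZ z) = (qY y / rY y) * qZ z / rZ z" by simp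
          thus ?thesis using False \<open>rY y \<noteq> 0\<close> by simp
        qed simp
      qed simp
      thus ?thesis using False by (simp only: sum_distrib_left[symmetric] if_False)
    qed simp
  qed simp
  finally show ?thesis .
qed

lemma fdiv_swap:
  fixes qY rY :: "'y::finite \<Rightarrow> real" and qZ rZ :: "'z::finite \<Rightarrow> real"
  shows "fdiv f (prod_dist qY qZ) (prod_dist rY rZ) = fdiv f (prod_dist qZ qY) (prod_dist rZ rY)"
  unfolding fdiv_def prod_dist_def
  by (rule sum.reindex_bij_witness[of _ prod.swap prod.swap]) (auto simp: split_beta mult.commute)




context
  fixes \<nu> :: ereal and G :: "real \<Rightarrow> real" and f :: "real \<Rightarrow> real"
  assumes nu_pos: "\<nu> > 0"
    and G_mono: "strict_mono_on {x. 0 \<le> x \<and> ereal x < \<nu>} G"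
    and G0: "G 0 = 0"
    and G_range: "G ` {x. 0 \<le> x \<and> ereal x < \<nu>} = {0..}"
    and G_concave: "\<forall>c. 0 < c \<and> ereal c < \<nu> \<longrightarrow>
        concave_on {x. 0 \<le> x \<and> ereal x < \<nu>}
          (\<lambda>x. the_inv_into {x. 0 \<le> x \<and> ereal x < \<nu>} G (G x + G c))"
    and f_convex: "convex_on {0..} f"
    and f1: "f 1 = 0"
    and f_Dm: "Dm f \<le> \<nu>"
begin

abbreviation "Dom \<equiv> {x. 0 \<le> x \<and> ereal x < \<nu>}"

lemma fdiv_Dom:
  fixes p q :: "'a::finite \<Rightarrow> real"
  assumes "is_dist p" "is_dist q" "abs_cont p q"
  shows "fdiv f p q \<in> Dom"
  using fdiv_nonneg[OF nu_pos f_convex f1 f_Dm assms] fdiv_less[OF nu_pos f_convex f1 f_Dm assms]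
  by simp

lemma fdiv_prod_Dom:
  fixes qY rY :: "'y::finite \<Rightarrow> real" and qZ rZ :: "'z::finite \<Rightarrow> real"
  assumes "is_dist qY" "is_dist rY" "abs_cont qY rY" "is_dist qZ" "is_dist rZ" "abs_cont qZ rZ"
  shows "fdiv f (prod_dist qY qZ) (prod_dist rY rZ) \<in> Dom"
  by (rule fdiv_Dom) (use assms in \<open>auto intro: prod_is_dist prod_abs_cont\<close>)

lemma G_inj: "inj_on G Dom"
  by (rule strict_mono_on_imp_inj_on[OF G_mono])

lemma G_le_iff: "a \<in> Dom \<Longrightarrow> b \<in> Dom \<Longrightarrow> G a \<le> G b \<longleftrightarrow> a \<le> b"
  using strict_mono_on_leD[OF G_mono] strict_mono_onD[OF G_mono]
  by (meson linorder_not_le)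

lemma G_nonneg: "a \<in> Dom \<Longrightarrow> G a \<ge> 0"
  using G_range by auto

lemma Dom_convex: "convex Dom"
proof (rule convexI)
  fix x y u v :: real
  assume xy: "x \<in> Dom" "y \<in> Dom" and uv: "0 \<le> u" "0 \<le> v" "u + v = 1"
  have "u *\<^sub>R x + v *\<^sub>R y \<le> max x y"
  proof -
    have "u * x + v * y \<le> u * max x y + v * max x y"
      using uv by (intro add_mono mult_left_mono) auto
    thus ?thesis using uv by (simp add: distrib_right[symmetric])
  qed
  moreover have "ereal (max x y) < \<nu>" using xy by (simp add: max_def)
  ultimately have "ereal (u *\<^sub>R x + v *\<^sub>R y) < \<nu>" by (meson ereal_less_eq(3) le_less_trans)
  moreover have "0 \<le> u *\<^sub>R x + v *\<^sub>R y" using xy uv by simp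
  ultimately show "u *\<^sub>R x + v *\<^sub>R y \<in> Dom" by simp
qed

lemma reduce:
  fixes qZ rZ :: "'z::finite \<Rightarrow> real" and qY rY :: "'y::finite \<Rightarrow> real"
  assumes dZ: "is_dist qZ" "is_dist rZ" "abs_cont qZ rZ"
    and bin: "\<And>(qY' :: bool \<Rightarrow> real) rY'. is_dist qY' \<Longrightarrow> is_dist rY' \<Longrightarrow> abs_cont qY' rY' \<Longrightarrow>
       G (fdiv f (prod_dist qY' qZ) (prod_dist rY' rZ)) \<le> G (fdiv f qY' rY') + G (fdiv f qZ rZ)"
    and dY: "is_dist qY" "is_dist rY" "abs_cont qY rY"
  shows "G (fdiv f (prod_dist qY qZ) (prod_dist rY rZ)) \<le> G (fdiv f qY rY) + G (fdiv f qZ rZ)"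
proof -
  define c where "c = fdiv f qZ rZ"
  have cD: "c \<in> Dom" unfolding c_def by (rule fdiv_Dom[OF dZ])
  define H where "H x = the_inv_into Dom G (G x + G c)" for x
  have HD: "H x \<in> Dom" and GH: "G (H x) = G x + G c" if "x \<in> Dom" for x
  proof -
    have "G x + G c \<in> G ` Dom" using G_range G_nonneg[OF that] G_nonneg[OF cD] by simp
    thus "H x \<in> Dom" "G (H x) = G x + G c" unfolding H_def
      using the_inv_into_into[OF G_inj] f_the_inv_into_f[OF G_inj] by auto
  qed
  have Hconc: "concave_on Dom H"
  proof (cases "c = 0")
    case False
    hence "0 < c" "ereal c < \<nu>" using cD by auto
    thus ?thesis using G_concave unfolding H_def by blast
  next
    case True
    have Hid: "H x = x" if "x \<in> Dom" for x
      unfolding H_def True G0 using the_inv_into_f_f[OF G_inj that] by simp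
    show ?thesis unfolding concave_on_iff
    proof (intro conjI Dom_convex ballI allI impI)
      fix x y u v :: real
      assume xy: "x \<in> Dom" "y \<in> Dom" and uv: "0 \<le> u" "0 \<le> v" "u + v = 1"
      have "u *\<^sub>R x + v *\<^sub>R y \<in> Dom" using Dom_convex xy uv by (simp add: convex_def)
      thus "u * H x + v * H y \<le> H (u *\<^sub>R x + v *\<^sub>R y)" using Hid xy by simp
    qed
  qed
  define \<phi> where "\<phi> u = (\<Sum>z\<in>UNIV. if rZ z = 0 then 0 else rZ z * f (u * qZ z / rZ z))" for u
  have fp: "fdiv f (prod_dist qY' qZ) (prod_dist rY' rZ) =
      (\<Sum>y\<in>UNIV. if rY' y = 0 then 0 else rY' y * \<phi> (qY' y / rY' y))" for qY' rY' :: "'b::finite \<Rightarrow> real"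
    unfolding \<phi>_def by (rule fdiv_prod)
  have two: "((b-1)/(b-a)) * f a + (1 - (b-1)/(b-a)) * f b \<in> Dom \<and>
       ((b-1)/(b-a)) * \<phi> a + (1 - (b-1)/(b-a)) * \<phi> b
         \<le> H (((b-1)/(b-a)) * f a + (1 - (b-1)/(b-a)) * f b)"
    if ab: "0 \<le> a" "a < 1" "1 \<le> b" for a b
  proof -
    define al where "al = (b-1)/(b-a)"
    have al: "0 \<le> al" "al < 1" using ab by (auto simp: al_def field_simps)
    have qsum: "al * a + (1 - al) * b = 1"
    proof -
      have nz: "b - a \<noteq> 0" using ab by simp
      have "al * a + (1 - al) * b = b - al * (b - a)" by algebra
      moreover have "al * (b - a) = b - 1" using nz by (simp add: al_def)
      ultimately show ?thesis by simp
    qed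
    define r' where "r' = (\<lambda>x::bool. if x then al else 1 - al)"
    define q' where "q' = (\<lambda>x::bool. if x then al * a else (1 - al) * b)"
    have dr: "is_dist r'" unfolding is_dist_def r'_def using al by (simp add: UNIV_bool)
    have dq: "is_dist q'" unfolding is_dist_def q'_def using al ab qsum by (simp add: UNIV_bool)
    have ac': "abs_cont q' r'" unfolding abs_cont_def q'_def r'_def using al by auto
    have gen: "(\<Sum>y\<in>UNIV. if r' y = 0 then 0 else r' y * g (q' y / r' y)) = al * g a + (1 - al) * g b"
      for g :: "real \<Rightarrow> real"
      unfolding r'_def q'_def using al by (simp add: UNIV_bool)
    have x_eq: "fdiv f q' r' = al * f a + (1 - al) * f b" unfolding fdiv_def by (rule gen)
    have y_eq: "fdiv f (prod_dist q' qZ) (prod_dist r' rZ) = al * \<phi> a + (1 - al) * \<phi> b"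
      unfolding fp by (rule gen)
    have xD: "al * f a + (1 - al) * f b \<in> Dom" using fdiv_Dom[OF dq dr ac'] x_eq by simp
    have yD: "al * \<phi> a + (1 - al) * \<phi> b \<in> Dom"
      using fdiv_prod_Dom[OF dq dr ac' dZ] y_eq by simp
    have "G (al * \<phi> a + (1 - al) * \<phi> b) \<le> G (al * f a + (1 - al) * f b) + G c"
      using bin[OF dq dr ac'] x_eq y_eq c_def by simp
    also have "\<dots> = G (H (al * f a + (1 - al) * f b))" using GH[OF xD] by simp
    finally have "al * \<phi> a + (1 - al) * \<phi> b \<le> H (al * f a + (1 - al) * f b)"
      using G_le_iff[OF yD HD[OF xD]] by simp
    thus ?thesis using xD unfolding al_def by simp
  qed
  have "(\<Sum>x\<in>{x. rY x \<noteq> 0}. rY x * \<phi> (qY x / rY x)) \<le> H (\<Sum>x\<in>{x. rY x \<noteq> 0}. rY x * f (qY x / rY x))"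
    by (rule decomp[OF Hconc two]) (use dY dist_supp[OF dY] in \<open>auto simp: is_dist_def\<close>)
  hence le: "fdiv f (prod_dist qY qZ) (prod_dist rY rZ) \<le> H (fdiv f qY rY)"
    unfolding fp sum_supp by (simp only: fdiv_supp)
  have DY: "fdiv f qY rY \<in> Dom" by (rule fdiv_Dom[OF dY])
  have DP: "fdiv f (prod_dist qY qZ) (prod_dist rY rZ) \<in> Dom" by (rule fdiv_prod_Dom[OF dY dZ])
  have "G (fdiv f (prod_dist qY qZ) (prod_dist rY rZ)) \<le> G (H (fdiv f qY rY))"
    using G_le_iff[OF DP HD[OF DY]] le by simp
  thus ?thesis using GH[OF DY] c_def by simp
qed

lemma main_ctx:
  fixes qY rY :: "'y::finite \<Rightarrow> real" and qZ rZ :: "'z::finite \<Rightarrow> real"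
  assumes binary: "\<forall>(qY' :: bool \<Rightarrow> real) (rY' :: bool \<Rightarrow> real)
        (qZ' :: bool \<Rightarrow> real) (rZ' :: bool \<Rightarrow> real).
        is_dist qY' \<and> is_dist rY' \<and> is_dist qZ' \<and> is_dist rZ' \<and>
        abs_cont qY' rY' \<and> abs_cont qZ' rZ' \<longrightarrow>
        G (fdiv f (prod_dist qY' qZ') (prod_dist rY' rZ'))
          \<le> G (fdiv f qY' rY') + G (fdiv f qZ' rZ')"
    and dists: "is_dist qY" "is_dist rY" "is_dist qZ" "is_dist rZ"
    and ac: "abs_cont qY rY" "abs_cont qZ rZ"
  shows "G (fdiv f (prod_dist qY qZ) (prod_dist rY rZ))
           \<le> G (fdiv f qY rY) + G (fdiv f qZ rZ)"
proof -
  have step1: "G (fdiv f (prod_dist qY' qZ) (prod_dist rY' rZ)) \<le> G (fdiv f qY' rY') + G (fdiv f qZ rZ)"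
    if b: "is_dist qY'" "is_dist rY'" "abs_cont qY' rY'" for qY' rY' :: "bool \<Rightarrow> real"
  proof -
    have "G (fdiv f (prod_dist qZ qY') (prod_dist rZ rY')) \<le> G (fdiv f qZ rZ) + G (fdiv f qY' rY')"
    proof (rule reduce[OF b])
      fix qZ' rZ' :: "bool \<Rightarrow> real"
      assume b': "is_dist qZ'" "is_dist rZ'" "abs_cont qZ' rZ'"
      have "G (fdiv f (prod_dist qY' qZ') (prod_dist rY' rZ')) \<le> G (fdiv f qY' rY') + G (fdiv f qZ' rZ')"
        using binary b b' by blast
      thus "G (fdiv f (prod_dist qZ' qY') (prod_dist rZ' rY')) \<le> G (fdiv f qZ' rZ') + G (fdiv f qY' rY')"
        by (simp only: fdiv_swap[of f qZ' qY' rZ' rY'] add.commute)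
    qed (rule dists ac)+
    thus ?thesis by (simp only: fdiv_swap[of f qZ qY' rZ rY'] add.commute)
  qed
  show ?thesis by (rule reduce[OF dists(3,4) ac(2) step1 dists(1,2) ac(1)])
qed

end

theorem lemma5:
  fixes \<nu> :: ereal and G :: "real \<Rightarrow> real" and f :: "real \<Rightarrow> real"
    and qY rY :: "'y::finite \<Rightarrow> real" and qZ rZ :: "'z::finite \<Rightarrow> real"
  assumes nu_pos: "\<nu> > 0"
    and G_mono: "strict_mono_on {x. 0 \<le> x \<and> ereal x < \<nu>} G"
    and G0: "G 0 = 0"
    and G_range: "G ` {x. 0 \<le> x \<and> ereal x < \<nu>} = {0..}"
    and G_concave: "\<forall>c. 0 < c \<and> ereal c < \<nu> \<longrightarrow>
        concave_on {x. 0 \<le> x \<and> ereal x < \<nu>}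
          (\<lambda>x. the_inv_into {x. 0 \<le> x \<and> ereal x < \<nu>} G (G x + G c))"
    and f_convex: "convex_on {0..} f"
    and f1: "f 1 = 0"
    and f_Dm: "Dm f \<le> \<nu>"
    and binary: "\<forall>(qY' :: bool \<Rightarrow> real) (rY' :: bool \<Rightarrow> real)
        (qZ' :: bool \<Rightarrow> real) (rZ' :: bool \<Rightarrow> real).
        is_dist qY' \<and> is_dist rY' \<and> is_dist qZ' \<and> is_dist rZ' \<and>
        abs_cont qY' rY' \<and> abs_cont qZ' rZ' \<longrightarrow>
        G (fdiv f (prod_dist qY' qZ') (prod_dist rY' rZ'))
          \<le> G (fdiv f qY' rY') + G (fdiv f qZ' rZ')"
    and dists: "is_dist qY" "is_dist rY" "is_dist qZ" "is_dist rZ"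
    and ac: "abs_cont qY rY" "abs_cont qZ rZ"
  shows "G (fdiv f (prod_dist qY qZ) (prod_dist rY rZ))
           \<le> G (fdiv f qY rY) + G (fdiv f qZ rZ)"
    by (rule main_ctx[OF nu_pos G_mono G0 G_range G_concave f_convex f1 f_Dm binary dists ac])

end
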